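(* Let $\{\theta_k\}_{k=0}^\infty$ be the positive sequence with $\theta_0=1$ and $\theta_{k+1}^2-\theta_{k+1}-\theta_k^2=0$ for $k=0,1,\dots$. Then there exists a real constant $\zeta$ (numerically $\zeta\approx0.646$) such that \[ \theta_k=\frac{k+\zeta+1}{2}+\frac{\log k}{4}+o(1)\quad\text{as }k\to\infty. \]
   Context: $\log$ is the natural logarithm. *)

theory Defs
  imports "HOL-Analysis.Analysis"
begin

end

theory Submission
  imports Defs
begin
lemma rec_step:
 fixes t t' :: real assumes t1: "t \<ge> 1" and t'0: "t' > 0" and r: "t'^2 - t' - t^2 = 0"
 shows "t' - t - 1/2 > 0" and "t' - t - 1/2 \<le> 1/(8*t)" and "\<bar>(t' - t - 1/2) - 1/(8*t)\<bar> \<le> 1/(128*t^3)"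
proof -
  define a where "a = t' - t - 1/2"
  have e: "2*t*a + a^2 = 1/4" using r unfolding a_def by (simp add: algebra_simps power2_eq_square)
  have ap: "a > 0"
  proof (rule ccontr)
    assume "\<not> a > 0"
    hence "a \<le> 0" by simp
    have "a*(2*t+a) > 0" using e by (simp add: algebra_simps power2_eq_square)
    hence "2*t+a < 0" using \<open>a \<le> 0\<close> by (smt (verit) mult_nonpos_nonneg)
    thus False using t1 t'0 unfolding a_def by linarith
  qed
  thus "t' - t - 1/2 > 0" unfolding a_def .
  have "2*t*a \<le> 1/4" using e by (smt (verit) zero_le_power2)
  hence al: "a \<le> 1/(8*t)" using t1 by (simp add: field_simps)
  thus "t' - t - 1/2 \<le> 1/(8*t)" unfolding a_def .
  have "a^2 = 1/4 - 2*t*a" using e by linarith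
  moreover have "1/(8*t) - a = (1/4 - 2*t*a)/(2*t)" using t1 by (simp add: field_simps)
  ultimately have d: "1/(8*t) - a = a^2/(2*t)" by simp
  have "a^2 \<le> (1/(8*t))^2" using al ap by (simp add: power_mono)
  hence "a^2/(2*t) \<le> (1/(8*t))^2/(2*t)" using t1 by (simp add: divide_right_mono)
  also have "\<dots> = 1/(128*t^3)" by (simp add: field_simps power2_eq_square power3_eq_cube)
  finally have f: "a^2/(2*t) \<le> 1/(128*t^3)" .
  have "\<bar>a - 1/(8*t)\<bar> = a^2/(2*t)" using d al by linarith
  with f show "\<bar>(t' - t - 1/2) - 1/(8*t)\<bar> \<le> 1/(128*t^3)" unfolding a_def by simp
qed

lemma sq_le: "x \<ge> 0 \<Longrightarrow> sqrt x \<le> (x+1)/2"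
proof -
  assume "x \<ge> 0"
  have "x \<le> ((x+1)/2)^2" using zero_le_power2[of "x-1"] by (simp add: power2_eq_square field_simps)
  thus ?thesis using \<open>x \<ge> 0\<close> by (intro real_le_lsqrt) auto
qed
lemma sqrt_step: "1/(real k + 2) \<le> sqrt (real k + 1) - sqrt (real k)"
proof -
  have p: "(sqrt (real k + 1) - sqrt (real k)) * (sqrt (real k + 1) + sqrt (real k)) = 1"
    by (simp add: algebra_simps)
  have q: "sqrt (real k + 1) + sqrt (real k) \<le> real k + 2" using sq_le[of "real k"] sq_le[of "real k + 1"] by simp
  have "sqrt (real k + 1) + sqrt (real k) > 0" by (smt (verit) real_sqrt_ge_zero real_sqrt_gt_zero of_nat_0_le_iff)
  then have "sqrt (real k + 1) - sqrt (real k) = 1 / (sqrt (real k + 1) + sqrt (real k))" using p by (simp add: field_simps)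
  also have "\<dots> \<ge> 1/(real k + 2)" using q \<open>_ > 0\<close> by (simp add: frac_le)
  finally show ?thesis .
qed
lemma absaux: fixes D x y z :: real assumes "D \<le> x" "-D \<le> -y" "x - y \<le> 4*z"
  shows "\<bar>D/4 - x/4\<bar> \<le> z" using assms by (intro abs_leI; linarith)
lemma ln_b: "real k \<ge> 1 \<Longrightarrow> \<bar>(ln (real (Suc k)) - ln (real k))/4 - 1/(4*real k)\<bar> \<le> 1/(real k)^2"
proof -
  assume k: "real k \<ge> 1"
  have u: "ln (real (Suc k)) - ln (real k) \<le> 1/real k"
    using ln_le_minus_one[of "real (Suc k)/real k"] k by (simp add: ln_div field_simps)
  have l: "ln (real k) - ln (real (Suc k)) \<le> - 1/(real k + 1)"
    using ln_le_minus_one[of "real k / real (Suc k)"] k by (simp add: ln_div field_simps)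
  have "1/real k - 1/(real k + 1) = 1/(real k*(real k+1))" using k by (simp add: field_simps)
  also have "\<dots> \<le> 1/(real k*real k)" using k by (intro divide_left_mono mult_left_mono) auto
  also have "\<dots> \<le> 4/(real k)^2" by (simp add: power2_eq_square divide_right_mono)
  finally have h4: "1/real k - 1/(real k + 1) \<le> 4/(real k)^2" .
  have h5: "- 1/(real k + 1) = -(1/(real k + 1))" by simp
  have h6: "4/(real k)^2 = 4*(1/(real k)^2)" by simp
  have "\<bar>(ln (real (Suc k)) - ln (real k))/4 - (1/real k)/4\<bar> \<le> 1/(real k)^2"
    by (rule absaux[where y="1/(real k + 1)"]) (use u l h4 h5 h6 in linarith)+
  thus ?thesis by (simp add: divide_divide_eq_left mult.commute)
qed
lemma powr_eq: "real k \<ge> 1 \<Longrightarrow> sqrt (real k) / (real k)^2 = real k powr (-3/2)"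
proof -
  assume k: "real k \<ge> 1"
  have "real k powr (-3/2) = real k powr (1/2 - 2)" by simp
  also have "\<dots> = real k powr (1/2) / real k powr 2" by (rule powr_diff)
  also have "real k powr 2 = real k ^ 2" using k by (simp add: powr_realpow)
  finally have "real k powr (-3/2) = real k powr (1/2) / real k ^ 2" .
  also have "\<dots> = sqrt (real k) / (real k)^2" using k by (simp add: powr_half_sqrt)
  finally show ?thesis by simp
qed

lemma lin2: fixes x1 x2 x3 :: real assumes "x1 \<le> x2" "x2 \<ge> 0" and "x3 = (3/4)*x2" shows "x1 + x3 + x1 \<le> 3*x2" using assms by linarith

theorem theorem7:
  fixes \<theta> :: "nat \<Rightarrow> real"
  assumes pos: "\<And>k. \<theta> k > 0"
    and init: "\<theta> 0 = 1"
    and rec: "\<And>k. (\<theta> (Suc k))\<^sup>2 - \<theta> (Suc k) - (\<theta> k)\<^sup>2 = 0"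
  shows "\<exists>\<zeta>::real. (\<lambda>k. \<theta> k - ((real k + \<zeta> + 1) / 2 + ln (real k) / 4)) \<longlonglongrightarrow> 0"
proof -
  have low: "\<theta> k \<ge> 1 + real k / 2" for k
  proof (induction k)
    case 0 then show ?case using init by simp
  next
    case (Suc k)
    have "\<theta> (Suc k) - \<theta> k - 1/2 > 0" using rec_step(1)[of "\<theta> k" "\<theta> (Suc k)"] Suc pos rec by fastforce
    moreover have "(1 + real k)/2 = 1/2 + real k/2" by simp
    ultimately show ?case using Suc by (smt (verit) of_nat_Suc)
  qed
  have upp: "\<theta> k \<le> 1 + real k / 2 + sqrt (real k) / 4" for k
  proof (induction k)
    case 0 then show ?case using init by simp
  next
    case (Suc k)
    have a: "\<theta> (Suc k) - \<theta> k - 1/2 \<le> 1/(8*\<theta> k)"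
      using rec_step(2)[of "\<theta> k" "\<theta> (Suc k)"] low[of k] pos rec by fastforce
    have "1/(8*\<theta> k) \<le> 1/(4*(real k + 2))" using low[of k] by (intro divide_left_mono) auto
    also have "\<dots> = (1/(real k + 2))/4" by simp
    also have "\<dots> \<le> (sqrt (real k + 1) - sqrt (real k))/4" using sqrt_step[of k] by (rule divide_right_mono) simp
    finally have F: "1/(8*\<theta> k) \<le> (sqrt (real k + 1) - sqrt (real k))/4" .
    have e1: "real (Suc k)/2 = real k/2 + 1/2" by simp
    have e2: "sqrt (real (Suc k)) = sqrt (real k + 1)" by simp
    show ?case unfolding e1 e2 using a F Suc diff_divide_distrib[of "sqrt (real k + 1)" "sqrt (real k)" 4] by linarith
  qed
  define d where "d k = \<theta> k - real k / 2 - ln (real k) / 4" for k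
  define e where "e k = d (Suc k) - d k" for k
  have eb: "norm (e k) \<le> 3 * real k powr (-3/2)" if k1: "k \<ge> 1" for k
  proof -
    have k: "real k \<ge> 1" using k1 by simp
    define t where "t = \<theta> k"
    have t1: "t \<ge> 1" "t \<ge> real k / 2" using low[of k] t_def by auto
    have tu: "2*t - real k \<le> 2 + sqrt (real k)/2" using upp[of k] t_def by simp
    have sk: "sqrt (real k) \<ge> 1" using k by simp
    define a where "a = \<theta> (Suc k) - t - 1/2"
    have e_eq: "e k = (a - 1/(8*t)) + (1/(8*t) - 1/(4*real k)) - ((ln (real (Suc k)) - ln (real k))/4 - 1/(4*real k))"
      unfolding e_def d_def a_def t_def by (simp add: field_simps)
    have A: "\<bar>a - 1/(8*t)\<bar> \<le> 1/(128*t^3)" unfolding a_def t_def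
      using rec_step(3)[of "\<theta> k" "\<theta> (Suc k)"] low[of k] pos rec by fastforce
    have "t^2 \<ge> (real k / 2)^2" using t1 k by (intro power_mono) auto
    hence h1: "(real k)^2 \<le> 4*t^2" by (simp add: power_divide)
    have h2: "t^3 \<ge> t^2" using t1 by (simp add: power_increasing)
    have "128*t^3 \<ge> (real k)^2" using h1 h2 zero_le_power2[of t] by linarith
    hence A2: "1/(128*t^3) \<le> 1/(real k)^2" using k t1 by (intro divide_left_mono) auto
    have "1/(8*t) - 1/(4*real k) = (real k - 2*t)/(8*t*real k)" using t1 k by (simp add: field_simps)
    hence "\<bar>1/(8*t) - 1/(4*real k)\<bar> = (2*t - real k)/(8*t*real k)" using t1 k by simp
    also have "\<dots> \<le> (3 * sqrt (real k)) / (8*t*real k)"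
    proof (rule divide_right_mono)
      show "2*t - real k \<le> 3 * sqrt (real k)" using tu sk by linarith
    qed (use t1 k in auto)
    also have "\<dots> \<le> (3 * sqrt (real k)) / (4 * (real k)^2)" using t1 k sk
      by (intro divide_left_mono) (auto simp: power2_eq_square)
    finally have B: "\<bar>1/(8*t) - 1/(4*real k)\<bar> \<le> (3 * sqrt (real k)) / (4 * (real k)^2)" .
    have C: "\<bar>(ln (real (Suc k)) - ln (real k))/4 - 1/(4*real k)\<bar> \<le> 1/(real k)^2" using ln_b k by simp
    have "norm (e k) \<le> 1/(real k)^2 + (3 * sqrt (real k)) / (4 * (real k)^2) + 1/(real k)^2"
      unfolding e_eq real_norm_def using A A2 B C by linarith
    also have "\<dots> \<le> 3 * (sqrt (real k) / (real k)^2)"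
    proof -
      have "1/(real k)^2 \<le> sqrt(real k)/(real k)^2" using sk by (intro divide_right_mono) auto
      moreover have "(3 * sqrt (real k)) / (4 * (real k)^2) = 3/4 * (sqrt (real k) / (real k)^2)" by simp
      moreover have "sqrt (real k) / (real k)^2 \<ge> 0" by simp
      ultimately show ?thesis using lin2 by blast
    qed
    also have "\<dots> = 3 * real k powr (-3/2)" using powr_eq k by simp
    finally show ?thesis .
  qed
  have sg: "summable (\<lambda>k. 3 * real k powr (-3/2))"
    by (intro summable_mult) (simp add: summable_real_powr_iff)
  have se: "summable e" by (rule summable_comparison_test'[OF sg eb]) simp
  have "(\<lambda>n. \<Sum>k<n. e k) \<longlonglongrightarrow> suminf e" using se by (rule summable_LIMSEQ)
  moreover have "(\<Sum>k<n. e k) = d n - d 0" for n unfolding e_def by (rule sum_lessThan_telescope)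
  ultimately have "(\<lambda>n. d n - d 0) \<longlonglongrightarrow> suminf e" by simp
  hence "(\<lambda>n. d n - d 0 - suminf e) \<longlonglongrightarrow> 0" by (simp add: LIM_zero)
  moreover have "(\<lambda>k. \<theta> k - ((real k + (2*(d 0 + suminf e) - 1) + 1)/2 + ln (real k)/4)) = (\<lambda>n. d n - d 0 - suminf e)"
    by (rule ext) (simp add: d_def field_simps)
  ultimately show ?thesis by (intro exI[of _ "2*(d 0 + suminf e) - 1"]) simp
qed
end
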